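(* (i) For all $x\in[-0.5,0.5]$, $|E_4(x+0.65i)|<5.9$. (ii) For all $x\in[-0.5,0.5]$, $|E_4(x+0.75i)|<3.45$.
   Context: $q=e^{2\pi i\tau}$ for $\tau$ in the upper half plane, and $E_4(\tau)=1+240\sum_{n\ge1}\sigma_3(n)q^n$ with $\sigma_3(n)=\sum_{d\mid n}d^3$. *)

theory Defs
  imports "HOL-Analysis.Analysis"
begin

definition sigma3 :: "nat \<Rightarrow> nat" where
  "sigma3 n = (\<Sum>d | d dvd n. d ^ 3)"

definition qnome :: "complex \<Rightarrow> complex" where
  "qnome \<tau> = exp (2 * of_real pi * \<i> * \<tau>)"

definition E4 :: "complex \<Rightarrow> complex" where
  "E4 \<tau> = 1 + 240 * (\<Sum>n. of_nat (sigma3 (Suc n)) * qnome \<tau> ^ Suc n)"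

end

theory Submission
  imports Defs "HOL-Analysis.Analysis"
begin

lemma sigma3_le_pow4: "sigma3 n \<le> n ^ 4"
proof (cases "n = 0")
  case True then show ?thesis by (simp add: sigma3_def)
next
  case False
  have sub: "{d. d dvd n} \<subseteq> {1..n}" using False
    by (auto intro: dvd_imp_le dest: dvd_imp_le)
  have "sigma3 n \<le> (\<Sum>d\<in>{1..n}. d ^ 3)" unfolding sigma3_def
    by (rule sum_mono2) (use sub in auto)
  also have "\<dots> \<le> (\<Sum>d\<in>{1..n}. n ^ 3)" by (intro sum_mono power_mono) auto
  also have "\<dots> = n ^ 4" by (simp add: power_eq_if)
  finally show ?thesis .
qed

lemma pow4_le: "n ^ 4 \<le> 4 * 3 ^ n" for n :: nat
proof -
  have "n \<ge> 4 \<Longrightarrow> n ^ 4 \<le> 4 * 3 ^ n"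
  proof (induction n rule: dec_induct)
    case base then show ?case by simp
  next
    case (step m)
    have "(Suc m) ^ 4 \<le> 3 * m ^ 4"
    proof -
      have "(Suc m)^4 = m^4 + 4*m^3 + 6*m^2 + 4*m + 1" by (simp add: power_eq_if algebra_simps)
      moreover have "4*m^3 \<le> m^4" using step(1) by (simp add: power_eq_if)
      moreover have "6*m^2 + 4*m + 1 \<le> m^4"
      proof -
        have "m^2 \<ge> 16" using step(1) power_mono[of 4 m 2] by simp
        have "m^4 = m^2*m^2" by (simp add: power_eq_if)
        moreover have "16 * m^2 \<le> m^2*m^2" using mult_right_mono[OF \<open>m^2 \<ge> 16\<close>, of "m^2"] by simp
        ultimately have "m^4 \<ge> 16*m^2" by simp
        moreover have "m \<le> m^2" by (simp add: power2_eq_square)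
        moreover have "1 \<le> m^2" using \<open>m^2 \<ge> 16\<close> by simp
        ultimately show ?thesis by linarith
      qed
      ultimately show ?thesis by linarith
    qed
    then show ?case using step(3) by simp
  qed
  moreover have "n < 4 \<Longrightarrow> n ^ 4 \<le> 4 * 3 ^ n"
  proof -
    assume "n < 4"
    then have "n = 0 \<or> n = 1 \<or> n = 2 \<or> n = 3" by auto
    then show ?thesis by (elim disjE) simp_all
  qed
  ultimately show ?thesis by linarith
qed

lemma sigma3_1: "sigma3 1 = 1" by (simp add: sigma3_def)

lemma sigma3_2: "sigma3 2 = 9"
proof -
  have "{d::nat. d dvd 2} = {1,2}"
  proof (rule set_eqI, rule iffI)
    fix d assume "d \<in> {d::nat. d dvd 2}"
    then have "d dvd 2" by simp
    then have "d \<le> 2" using dvd_imp_le[of d 2] by auto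
    moreover have "d \<noteq> 0" using \<open>d dvd 2\<close> by (metis dvd_0_left_iff zero_neq_numeral)
    ultimately show "d \<in> {1,2}" by auto
  qed auto
  then show ?thesis by (simp add: sigma3_def)
qed

lemma norm_qnome: "norm (qnome (Complex x y)) = exp (- 2 * pi * y)"
  by (simp add: qnome_def norm_exp_eq_Re)

lemma E4_bound:
  fixes x y r :: real
  assumes r: "r = exp (- 2 * pi * y)" and r3: "3 * r < 1"
  shows "norm (E4 (Complex x y)) \<le> 1 + 240 * (r + 9 * r^2 + 4 * (3*r)^3 / (1 - 3*r))"
proof -
  define q where "q = qnome (Complex x y)"
  have nq: "norm q = r" using r by (simp add: q_def norm_qnome)
  have r0: "0 \<le> r" using r by simp
  define a where "a = (\<lambda>n. of_nat (sigma3 (Suc n)) * q ^ Suc n)"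
  define b where "b n = real (sigma3 (Suc n)) * r ^ Suc n" for n
  define c where "c n = 4 * (3*r) ^ Suc n" for n
  have nab: "norm (a n) = b n" for n by (simp add: a_def b_def norm_mult norm_power nq)
  have bc: "b n \<le> c n" for n
  proof -
    have "real (sigma3 (Suc n)) \<le> 4 * 3 ^ Suc n"
    proof -
      have "sigma3 (Suc n) \<le> 4 * 3 ^ Suc n" using order_trans[OF sigma3_le_pow4 pow4_le] .
      then have "real (sigma3 (Suc n)) \<le> real (4 * 3 ^ Suc n)" by (simp only: of_nat_le_iff)
      then show ?thesis by simp
    qed
    then have "real (sigma3 (Suc n)) * r ^ Suc n \<le> 4 * 3 ^ Suc n * r ^ Suc n"
      using r0 by (intro mult_right_mono) auto
    moreover have "4 * 3 ^ Suc n * r ^ Suc n = c n" unfolding c_def by (simp only: power_mult_distrib mult.assoc)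
    ultimately show ?thesis by (simp add: b_def)
  qed
  have b0: "b n \<ge> 0" for n using r0 by (simp add: b_def)
  have n3: "norm (3*r) < 1" using r0 r3 by simp
  have geo: "(\<lambda>n. (3*r)^n) sums (1 / (1 - 3*r))" using n3 by (rule geometric_sums)
  have sg: "summable (\<lambda>n. (3*r)^n)" using geo by (rule sums_summable)
  have "summable (\<lambda>n. (3*r)^Suc n)" using sg by (simp only: summable_Suc_iff)
  then have sc: "summable c" unfolding c_def by (rule summable_mult)
  have nb: "norm (b n) \<le> c n" for n using b0[of n] bc[of n] by simp
  have sb: "summable b" using sc nb by (rule summable_comparison_test')
  have sna: "summable (\<lambda>n. norm (a n))" using sb nab by simp
  have e4: "E4 (Complex x y) = 1 + 240 * suminf a" unfolding E4_def a_def q_def ..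
  have t1: "norm (E4 (Complex x y)) \<le> 1 + 240 * norm (suminf a)"
    unfolding e4 using norm_triangle_ineq[of 1 "240 * suminf a"] by (simp add: norm_mult)
  have t2: "norm (suminf a) \<le> suminf b" using summable_norm[OF sna] nab by simp
  have t3: "suminf b = (\<Sum>n. b (n + 2)) + (\<Sum>n<2. b n)"
    using suminf_split_initial_segment[OF sb, of 2] by simp
  have t4: "(\<Sum>n<2. b n) = b 0 + b 1" by (simp add: eval_nat_numeral)
  have t5: "b 0 = r" using sigma3_1 by (simp add: b_def)
  have "b 1 = real (sigma3 2) * r ^ 2" by (simp add: b_def numeral_2_eq_2)
  then have t6: "b 1 = 9 * r^2" by (simp add: sigma3_2)
  have t7: "(\<Sum>n. b (n + 2)) \<le> (\<Sum>n. c (n + 2))"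
  proof (rule suminf_le)
    show "summable (\<lambda>n. b (n + 2))" using sb by (simp only: summable_iff_shift)
    show "summable (\<lambda>n. c (n + 2))" using sc by (simp only: summable_iff_shift)
  qed (rule bc)
  have t8: "(\<Sum>n. c (n + 2)) = 4 * (3*r)^3 / (1 - 3*r)"
  proof -
    have "c (n + 2) = (4 * (3*r)^3) * (3*r)^n" for n
    proof -
      have "(3*r)^3 * (3*r)^n = (3*r)^(3+n)" by (rule power_add[symmetric])
      moreover have "Suc (n+2) = 3+n" by simp
      ultimately show ?thesis unfolding c_def by (simp only: mult.assoc)
    qed
    moreover have "(\<lambda>n. (4 * (3*r)^3) * (3*r)^n) sums ((4 * (3*r)^3) * (1 / (1 - 3*r)))" by (intro sums_mult geo)
    ultimately show ?thesis by (simp add: sums_iff)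
  qed
  have s: "norm (suminf a) \<le> r + 9 * r^2 + 4 * (3*r)^3 / (1 - 3*r)"
    using t2 t3 t4 t5 t6 t7 t8 by linarith
  have gen: "\<And>A B C::real. A \<le> 1 + 240 * B \<Longrightarrow> B \<le> C \<Longrightarrow> A \<le> 1 + 240 * C" by linarith
  show ?thesis by (rule gen[OF t1 s])
qed

lemma g_mono:
  fixes r u :: real
  assumes "0 \<le> r" "r \<le> u" "3 * u < 1"
  shows "r + 9 * r^2 + 4 * (3*r)^3 / (1 - 3*r) \<le> u + 9 * u^2 + 4 * (3*u)^3 / (1 - 3*u)"
proof -
  have "r^2 \<le> u^2" using assms by (intro power_mono) auto
  moreover have "(3*r)^3 \<le> (3*u)^3" using assms by (intro power_mono) auto
  then have "4 * (3*r)^3 / (1 - 3*r) \<le> 4 * (3*u)^3 / (1 - 3*u)"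
    using assms by (intro frac_le) auto
  ultimately show ?thesis using assms by linarith
qed

lemma e_lb: "2.718 \<le> exp (1::real)"
proof -
  have "- inverse (2^32) \<le> exp 1 - 5837465777 / (2147483648::real)"
    using e_approx_32 by (simp only: abs_le_iff) linarith
  then show ?thesis by simp
qed

lemma exp4_lb: "54.5 \<le> exp (4::real)"
proof -
  have "exp (4::real) = exp 1 ^ 4" using exp_of_nat_mult[of 4 "1::real"] by simp
  moreover have "(2.718::real)^4 \<le> exp 1 ^ 4" using e_lb by (intro power_mono) auto
  moreover have "54.5 \<le> (2.718::real)^4" by (simp add: power_divide)
  ultimately show ?thesis by linarith
qed

lemma exp_lb1: "59 \<le> exp (2 * pi * 0.65)"
proof -
  have h: "4.084 \<le> 2 * pi * 0.65" using pi_approx(1) by simp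
  have e: "1.084 \<le> exp (0.084::real)" using exp_ge_add_one_self[of "0.084::real"] by simp
  have "(59::real) \<le> 54.5 * 1.084" by simp
  also have "\<dots> \<le> exp 4 * exp (0.084::real)"
    using exp4_lb e by (intro mult_mono) auto
  also have "\<dots> = exp 4.084" by (simp add: exp_add[symmetric])
  also have "\<dots> \<le> exp (2 * pi * 0.65)" using h by (simp only: exp_le_cancel_iff)
  finally show ?thesis .
qed

lemma exp_lb2: "109 \<le> exp (2 * pi * 0.75)"
proof -
  have h: "4.712 \<le> 2 * pi * 0.75" using pi_approx(1) by simp
  have "(1 + 0.712 / real 20) ^ 20 \<le> exp (0.712::real)"
    by (rule exp_ge_one_plus_x_over_n_power_n) auto
  moreover have "2 \<le> (1 + 0.712 / real 20) ^ 20" by (simp add: power_divide)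
  ultimately have e: "2 \<le> exp (0.712::real)" by linarith
  have "(109::real) \<le> 54.5 * 2" by simp
  also have "\<dots> \<le> exp 4 * exp (0.712::real)"
    using exp4_lb e by (intro mult_mono) auto
  also have "\<dots> = exp 4.712" by (simp add: exp_add[symmetric])
  also have "\<dots> \<le> exp (2 * pi * 0.75)" using h by (simp only: exp_le_cancel_iff)
  finally show ?thesis .
qed

lemma case_gen:
  fixes y B u :: real
  assumes lb: "1 / u \<le> exp (2 * pi * y)" and u: "0 < u" "3 * u < 1"
    and num: "1 + 240 * (u + 9 * u^2 + 4 * (3*u)^3 / (1 - 3*u)) < B"
  shows "norm (E4 (Complex x y)) < B"
proof -
  define r where "r = exp (- 2 * pi * y)"
  have r0: "0 \<le> r" by (simp add: r_def)
  have "r = inverse (exp (2 * pi * y))" by (simp add: r_def exp_minus[symmetric])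
  also have "\<dots> \<le> inverse (1 / u)" using lb u by (intro le_imp_inverse_le) auto
  finally have ru: "r \<le> u" using u by simp
  have r3: "3 * r < 1" using ru u by linarith
  have "norm (E4 (Complex x y)) \<le> 1 + 240 * (r + 9 * r^2 + 4 * (3*r)^3 / (1 - 3*r))"
    by (rule E4_bound[OF r_def r3])
  also have "\<dots> \<le> 1 + 240 * (u + 9 * u^2 + 4 * (3*u)^3 / (1 - 3*u))"
  proof -
    have m: "\<And>A C::real. A \<le> C \<Longrightarrow> 1 + 240 * A \<le> 1 + 240 * C" by simp
    show ?thesis by (rule m[OF g_mono[OF r0 ru u(2)]])
  qed
  also have "\<dots> < B" by (rule num)
  finally show ?thesis .
qed

theorem lemma4p7:
  shows "(\<forall>x::real. -0.5 \<le> x \<and> x \<le> 0.5 \<longrightarrow>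
            norm (E4 (Complex x 0.65)) < 5.9) \<and>
         (\<forall>x::real. -0.5 \<le> x \<and> x \<le> 0.5 \<longrightarrow>
            norm (E4 (Complex x 0.75)) < 3.45)"
proof (intro conjI allI impI)
  fix x :: real
  show "norm (E4 (Complex x 0.65)) < 5.9"
    by (rule case_gen[where u = "1/59"]) (use exp_lb1 in \<open>simp_all add: power_divide\<close>)
  show "norm (E4 (Complex x 0.75)) < 3.45"
    by (rule case_gen[where u = "1/109"]) (use exp_lb2 in \<open>simp_all add: power_divide\<close>)
qed

end
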